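(* Let $S$ be the quantum system with Hilbert space $\mathcal H_S=\mathcal H_A\otimes\mathcal H_B$ (finite-dimensional), whose states are all density operators on $\mathcal H_S$ and whose transformations are all quantum channels on $\mathsf{Lin}(\mathcal H_S)$. Let the agent $A$ have $\mathsf{Act}(A;S)=\{\mathcal A\otimes\mathcal I_B:\mathcal A\in\mathsf{Chan}(A)\}$. Then two states $\rho,\sigma$ are equivalent for $A$ if and only if $\operatorname{Tr}_B[\rho]=\operatorname{Tr}_B[\sigma]$, where $\operatorname{Tr}_B$ is the partial trace over $\mathcal H_B$.
   Context: $\mathsf{Chan}(X)$ is the set of quantum channels on $\mathsf{Lin}(\mathcal H_X)$. For an agent $A$ (a subset $\mathsf{Act}(A;S)$ of transformations), $\mathsf{Act}(A;S)'$ is the set of all channels on $\mathcal H_S$ commuting with every element of $\mathsf{Act}(A;S)$, and $\mathrm{Deg}_{A'}(\psi)=\{\mathcal B(\psi):\mathcal B\in\mathsf{Act}(A;S)'\}$. Two states $\rho,\sigma$ are equivalent for $A$ if there are states $\rho_1=\rho,\dots,\rho_n=\sigma$ with $\mathrm{Deg}_{A'}(\rho_i)\cap\mathrm{Deg}_{A'}(\rho_{i+1})\neq\emptyset$ for all $i$. *)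

theory Defs
  imports "Jordan_Normal_Form.Matrix" "Jordan_Normal_Form.Conjugate"
begin

text \<open>The tensor product H_A (dim dA) times H_B (dim dB) has dimension dA*dB, and the
  basis vector |a> tensor |b> has index a*dB + b (Kronecker convention).\<close>

definition psd :: "nat \<Rightarrow> complex mat \<Rightarrow> bool" where
  "psd n M \<longleftrightarrow> M \<in> carrier_mat n n \<and>
     (\<forall>v \<in> carrier_vec n. Im (conjugate v \<bullet> (M *\<^sub>v v)) = 0 \<and> Re (conjugate v \<bullet> (M *\<^sub>v v)) \<ge> 0)"

definition mtrace :: "complex mat \<Rightarrow> complex" where
  "mtrace M = (\<Sum>i<dim_row M. M $$ (i, i))"

definition density_op :: "nat \<Rightarrow> complex mat \<Rightarrow> bool" where
  "density_op n \<rho> \<longleftrightarrow> psd n \<rho> \<and> mtrace \<rho> = 1"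

text \<open>The (k,l) block of an operator on C^dA tensor C^dB: the dA x dA matrix
  with entries <i,k| M |j,l>.\<close>
definition block :: "nat \<Rightarrow> nat \<Rightarrow> complex mat \<Rightarrow> nat \<Rightarrow> nat \<Rightarrow> complex mat" where
  "block dA dB M k l = mat dA dA (\<lambda>(i, j). M $$ (i * dB + k, j * dB + l))"

text \<open>(Phi tensor id_B)(M) = sum_{k,l} Phi(M^{kl}) tensor |k><l|.\<close>
definition tensor_id :: "(complex mat \<Rightarrow> complex mat) \<Rightarrow> nat \<Rightarrow> nat \<Rightarrow> complex mat \<Rightarrow> complex mat" where
  "tensor_id \<Phi> dA dB M = mat (dA * dB) (dA * dB)
     (\<lambda>(r, c). (\<Phi> (block dA dB M (r mod dB) (c mod dB))) $$ (r div dB, c div dB))"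

definition linear_map_on :: "nat \<Rightarrow> (complex mat \<Rightarrow> complex mat) \<Rightarrow> bool" where
  "linear_map_on n \<Phi> \<longleftrightarrow>
     (\<forall>M \<in> carrier_mat n n. \<Phi> M \<in> carrier_mat n n) \<and>
     (\<forall>M \<in> carrier_mat n n. \<forall>N \<in> carrier_mat n n. \<Phi> (M + N) = \<Phi> M + \<Phi> N) \<and>
     (\<forall>M \<in> carrier_mat n n. \<forall>c::complex. \<Phi> (c \<cdot>\<^sub>m M) = c \<cdot>\<^sub>m \<Phi> M)"

definition completely_positive :: "nat \<Rightarrow> (complex mat \<Rightarrow> complex mat) \<Rightarrow> bool" where
  "completely_positive n \<Phi> \<longleftrightarrow>
     (\<forall>k > 0. \<forall>M. psd (n * k) M \<longrightarrow> psd (n * k) (tensor_id \<Phi> n k M))"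

definition trace_preserving :: "nat \<Rightarrow> (complex mat \<Rightarrow> complex mat) \<Rightarrow> bool" where
  "trace_preserving n \<Phi> \<longleftrightarrow> (\<forall>M \<in> carrier_mat n n. mtrace (\<Phi> M) = mtrace M)"

definition channel :: "nat \<Rightarrow> (complex mat \<Rightarrow> complex mat) \<Rightarrow> bool" where
  "channel n \<Phi> \<longleftrightarrow> linear_map_on n \<Phi> \<and> completely_positive n \<Phi> \<and> trace_preserving n \<Phi>"

text \<open>Equality of maps as maps on Lin(C^n).\<close>
definition commutant :: "nat \<Rightarrow> (complex mat \<Rightarrow> complex mat) set \<Rightarrow> (complex mat \<Rightarrow> complex mat) set" where
  "commutant n Act = {\<B>. channel n \<B> \<and>
     (\<forall>\<C> \<in> Act. \<forall>M \<in> carrier_mat n n. \<B> (\<C> M) = \<C> (\<B> M))}"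

definition Deg :: "nat \<Rightarrow> (complex mat \<Rightarrow> complex mat) set \<Rightarrow> complex mat \<Rightarrow> complex mat set" where
  "Deg n Act \<psi> = {\<B> \<psi> | \<B>. \<B> \<in> commutant n Act}"

definition overlap_step :: "nat \<Rightarrow> (complex mat \<Rightarrow> complex mat) set \<Rightarrow> complex mat \<Rightarrow> complex mat \<Rightarrow> bool" where
  "overlap_step n Act \<rho> \<sigma> \<longleftrightarrow> density_op n \<rho> \<and> density_op n \<sigma> \<and> Deg n Act \<rho> \<inter> Deg n Act \<sigma> \<noteq> {}"

definition agent_equiv :: "nat \<Rightarrow> (complex mat \<Rightarrow> complex mat) set \<Rightarrow> complex mat \<Rightarrow> complex mat \<Rightarrow> bool" where
  "agent_equiv n Act \<rho> \<sigma> \<longleftrightarrow> density_op n \<rho> \<and> density_op n \<sigma> \<and> (overlap_step n Act)\<^sup>*\<^sup>* \<rho> \<sigma>"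

definition local_actions :: "nat \<Rightarrow> nat \<Rightarrow> (complex mat \<Rightarrow> complex mat) set" where
  "local_actions dA dB = {tensor_id \<A> dA dB | \<A>. channel dA \<A>}"

definition partial_trace_B :: "nat \<Rightarrow> nat \<Rightarrow> complex mat \<Rightarrow> complex mat" where
  "partial_trace_B dA dB M = mat dA dA (\<lambda>(i, j). \<Sum>k<dB. M $$ (i * dB + k, j * dB + k))"

end

theory Submission
  imports Defs
begin

definition qf :: "nat \<Rightarrow> complex mat \<Rightarrow> (nat \<Rightarrow> complex) \<Rightarrow> complex" where
  "qf n M v = (\<Sum>i<n. \<Sum>j<n. cnj (v i) * M $$ (i,j) * v j)"

lemma nonneg_complex_iff: "(x::complex) \<ge> 0 \<longleftrightarrow> Im x = 0 \<and> Re x \<ge> 0"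
  by (auto simp: less_eq_complex_def)

lemma qf_vec:
  assumes "M \<in> carrier_mat n n" "v \<in> carrier_vec n"
  shows "conjugate v \<bullet> (M *\<^sub>v v) = qf n M (\<lambda>i. v $ i)"
  using assms unfolding qf_def scalar_prod_def
  by (auto simp: sum_distrib_left mult.assoc scalar_prod_def intro!: sum.cong)

lemma psd_iff:
  "psd n M \<longleftrightarrow> M \<in> carrier_mat n n \<and> (\<forall>v. qf n M v \<ge> 0)"
proof
  assume a: "psd n M"
  hence c: "M \<in> carrier_mat n n" unfolding psd_def by auto
  show "M \<in> carrier_mat n n \<and> (\<forall>v. qf n M v \<ge> 0)"
  proof (intro conjI allI c)
    fix v :: "nat \<Rightarrow> complex"
    have vc: "vec n v \<in> carrier_vec n" by simp
    have "qf n M v = qf n M (\<lambda>i. vec n v $ i)" unfolding qf_def by (auto intro!: sum.cong)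
    also have "\<dots> = conjugate (vec n v) \<bullet> (M *\<^sub>v vec n v)" using qf_vec[OF c vc] by simp
    finally show "qf n M v \<ge> 0" using a vc unfolding psd_def nonneg_complex_iff by auto
  qed
next
  assume "M \<in> carrier_mat n n \<and> (\<forall>v. qf n M v \<ge> 0)"
  thus "psd n M" unfolding psd_def using qf_vec nonneg_complex_iff by metis
qed

lemma sum_fiber:
  assumes "\<And>r. r < N1 \<Longrightarrow> g r < (N0::nat)"
  shows "(\<Sum>p<N0. \<Sum>r\<in>{r\<in>{..<N1}. g r = p}. h p r) = (\<Sum>r<(N1::nat). h (g r) r)"
proof -
  have "(\<Sum>p<N0. \<Sum>r\<in>{r\<in>{..<N1}. g r = p}. h p r) = (\<Sum>p<N0. \<Sum>r\<in>{r\<in>{..<N1}. g r = p}. h (g r) r)"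
    by (intro sum.cong) auto
  also have "\<dots> = (\<Sum>r<N1. h (g r) r)"
    by (rule sum.group) (use assms in auto)
  finally show ?thesis .
qed

lemma swap3: "(\<Sum>r\<in>R. \<Sum>q\<in>Q. \<Sum>c\<in>C q. f r q c) = (\<Sum>q\<in>Q. \<Sum>c\<in>C q. \<Sum>r\<in>R. f r q c)"
  apply (subst sum.swap)
  apply (rule sum.cong[OF refl])
  apply (rule sum.swap)
  done

lemma qf_fiber:
  assumes "\<And>r. r < N1 \<Longrightarrow> g r < (N0::nat)"
  shows "(\<Sum>p<N0. \<Sum>q<N0. (\<Sum>r\<in>{r\<in>{..<N1}. g r = p}. a r) * M $$ (p,q) * (\<Sum>c\<in>{c\<in>{..<N1}. g c = q}. b c))
     = (\<Sum>r<(N1::nat). \<Sum>c<N1. a r * M $$ (g r, g c) * (b c :: complex))"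
proof -
  have inner: "(\<Sum>c<N1. M $$ (p, g c) * b c) = (\<Sum>q<N0. M $$ (p,q) * (\<Sum>c\<in>{c\<in>{..<N1}. g c = q}. b c))" for p
    using sum_fiber[OF assms, where h="\<lambda>q c. M $$ (p,q) * b c"] by (simp add: sum_distrib_left)
  have "(\<Sum>r<N1. \<Sum>c<N1. a r * M $$ (g r, g c) * b c) = (\<Sum>r<N1. a r * (\<Sum>c<N1. M $$ (g r, g c) * b c))"
    by (simp add: sum_distrib_left mult.assoc)
  also have "\<dots> = (\<Sum>r<N1. a r * (\<Sum>q<N0. M $$ (g r,q) * (\<Sum>c\<in>{c\<in>{..<N1}. g c = q}. b c)))"
    using inner by simp
  also have "\<dots> = (\<Sum>p<N0. \<Sum>r\<in>{r\<in>{..<N1}. g r = p}. a r * (\<Sum>q<N0. M $$ (p,q) * (\<Sum>c\<in>{c\<in>{..<N1}. g c = q}. b c)))"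
    using sum_fiber[OF assms, where h="\<lambda>p r. a r * (\<Sum>q<N0. M $$ (p,q) * (\<Sum>c\<in>{c\<in>{..<N1}. g c = q}. b c))"] by simp
  also have "\<dots> = (\<Sum>p<N0. \<Sum>q<N0. (\<Sum>r\<in>{r\<in>{..<N1}. g r = p}. a r) * M $$ (p,q) * (\<Sum>c\<in>{c\<in>{..<N1}. g c = q}. b c))"
    apply (simp add: sum_distrib_left sum_distrib_right mult.assoc)
    apply (rule sum.cong[OF refl])
    apply (rule swap3)
    done
  finally show ?thesis by simp
qed

lemma kraus_psd:
  assumes M: "psd N0 M" and N: "N \<in> carrier_mat N1 N1"
    and g: "\<And>m r. m < L \<Longrightarrow> r < N1 \<Longrightarrow> g m r < N0"
    and e: "\<And>r c. r < N1 \<Longrightarrow> c < N1 \<Longrightarrow>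
       N $$ (r,c) = (\<Sum>m<(L::nat). \<alpha> m r * M $$ (g m r, g m c) * cnj (\<alpha> m c))"
  shows "psd N1 N"
  unfolding psd_iff
proof (intro conjI allI N)
  fix v
  define w where "w m q = (\<Sum>c\<in>{c\<in>{..<N1}. g m c = q}. cnj (\<alpha> m c) * v c)" for m q
  have "qf N1 N v = (\<Sum>m<L. qf N0 M (w m))"
  proof -
    have "qf N1 N v = (\<Sum>r<N1. \<Sum>c<N1. \<Sum>m<L. (cnj (v r) * \<alpha> m r) * M $$ (g m r, g m c) * (cnj (\<alpha> m c) * v c))"
      unfolding qf_def using e by (auto simp: sum_distrib_left sum_distrib_right mult.assoc mult.left_commute intro!: sum.cong)
    also have "\<dots> = (\<Sum>m<L. \<Sum>r<N1. \<Sum>c<N1. (cnj (v r) * \<alpha> m r) * M $$ (g m r, g m c) * (cnj (\<alpha> m c) * v c))"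
      by (simp add: sum.swap[of _ "{..<L}"])
    also have "\<dots> = (\<Sum>m<L. qf N0 M (w m))"
    proof (intro sum.cong refl)
      fix m assume "m \<in> {..<L}"
      hence gm: "\<And>r. r < N1 \<Longrightarrow> g m r < N0" using g by auto
      have cw: "cnj (w m p) = (\<Sum>r\<in>{r\<in>{..<N1}. g m r = p}. cnj (v r) * \<alpha> m r)" for p
        unfolding w_def by (simp add: mult.commute)
      show "(\<Sum>r<N1. \<Sum>c<N1. (cnj (v r) * \<alpha> m r) * M $$ (g m r, g m c) * (cnj (\<alpha> m c) * v c)) = qf N0 M (w m)"
        unfolding qf_def cw using qf_fiber[OF gm, where a="\<lambda>r. cnj (v r) * \<alpha> m r" and M=M and b="\<lambda>c. cnj (\<alpha> m c) * v c"]
        unfolding w_def by simp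
    qed
    finally show ?thesis .
  qed
  also have "\<dots> \<ge> 0" using M unfolding psd_iff by (intro sum_nonneg) auto
  finally show "qf N1 N v \<ge> 0" .
qed

lemma idx_lt: "a < (A::nat) \<Longrightarrow> b < B \<Longrightarrow> a * B + b < A * B"
proof -
  assume "a < A" "b < B"
  hence "a * B + b < a * B + B" by simp
  also have "\<dots> = Suc a * B" by simp
  also have "\<dots> \<le> A * B" using \<open>a < A\<close> by (intro mult_right_mono) auto
  finally show ?thesis .
qed

lemma idx_div: "b < (B::nat) \<Longrightarrow> (a * B + b) div B = a" by simp
lemma idx_mod: "b < (B::nat) \<Longrightarrow> (a * B + b) mod B = b" by simp

lemma idx_div_lt: "r < A * (B::nat) \<Longrightarrow> r div B < A"
  by (simp add: less_mult_imp_div_less)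

lemma idx_mod_lt: "r < A * (B::nat) \<Longrightarrow> r mod B < B"
  by (cases "B = 0") auto

lemma sum_prod_idx: "(\<Sum>r<A * (B::nat). f r) = (\<Sum>a<A. \<Sum>b<B. f (a * B + b))"
  by (simp add: sum.nat_group[symmetric] sum.atLeastLessThan_shift_0 atLeast0LessThan comp_def)

lemma lin_carrier: "linear_map_on n \<Phi> \<Longrightarrow> M \<in> carrier_mat n n \<Longrightarrow> \<Phi> M \<in> carrier_mat n n"
  unfolding linear_map_on_def by auto
lemma lin_add: "linear_map_on n \<Phi> \<Longrightarrow> M \<in> carrier_mat n n \<Longrightarrow> N \<in> carrier_mat n n \<Longrightarrow> \<Phi> (M + N) = \<Phi> M + \<Phi> N"
  unfolding linear_map_on_def by auto
lemma lin_smult: "linear_map_on n \<Phi> \<Longrightarrow> M \<in> carrier_mat n n \<Longrightarrow> \<Phi> (c \<cdot>\<^sub>m M) = c \<cdot>\<^sub>m \<Phi> M"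
  unfolding linear_map_on_def by auto
lemma lin_zero: assumes "linear_map_on n \<Phi>" shows "\<Phi> (0\<^sub>m n n) = 0\<^sub>m n n"
proof -
  have "0\<^sub>m n n = (0::complex) \<cdot>\<^sub>m 0\<^sub>m n n" by (intro eq_matI) auto
  hence "\<Phi> (0\<^sub>m n n) = 0 \<cdot>\<^sub>m \<Phi> (0\<^sub>m n n)" using lin_smult[OF assms, of "0\<^sub>m n n" 0] by simp
  also have "\<dots> = 0\<^sub>m n n" using lin_carrier[OF assms, of "0\<^sub>m n n"] by (intro eq_matI) auto
  finally show ?thesis .
qed

lemma channel_lin: "channel n \<Phi> \<Longrightarrow> linear_map_on n \<Phi>" unfolding channel_def by auto

lemma density_carrier: "density_op n \<rho> \<Longrightarrow> \<rho> \<in> carrier_mat n n"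
  unfolding density_op_def psd_def by auto

lemma ptr_carrier[simp]: "partial_trace_B dA dB M \<in> carrier_mat dA dA"
  unfolding partial_trace_B_def by simp

lemma ptr_dims[simp]: "dim_row (partial_trace_B dA dB M) = dA" "dim_col (partial_trace_B dA dB M) = dA"
  unfolding partial_trace_B_def by simp_all

lemma ptr_index: "i < dA \<Longrightarrow> j < dA \<Longrightarrow> partial_trace_B dA dB M $$ (i,j) = (\<Sum>k<dB. M $$ (i * dB + k, j * dB + k))"
  unfolding partial_trace_B_def by simp

lemma ptr_add: assumes "A \<in> carrier_mat (dA*dB) (dA*dB)" "B \<in> carrier_mat (dA*dB) (dA*dB)"
  shows "partial_trace_B dA dB (A + B) = partial_trace_B dA dB A + partial_trace_B dA dB B"
  using assms by (intro eq_matI) (auto simp: ptr_index idx_lt sum.distrib)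

lemma ptr_smult: assumes "A \<in> carrier_mat (dA*dB) (dA*dB)"
  shows "partial_trace_B dA dB (c \<cdot>\<^sub>m A) = c \<cdot>\<^sub>m partial_trace_B dA dB A"
  using assms by (intro eq_matI) (auto simp: ptr_index idx_lt sum_distrib_left)

lemma mtrace_prod: assumes "M \<in> carrier_mat (dA*dB) (dA*dB)"
  shows "mtrace M = (\<Sum>a<dA. \<Sum>b<dB. M $$ (a * dB + b, a * dB + b))"
  using assms unfolding mtrace_def by (simp add: sum_prod_idx)

subsection \<open>The replacement channel on B\<close>

definition Brep :: "nat \<Rightarrow> nat \<Rightarrow> complex mat \<Rightarrow> complex mat" where
  "Brep dA dB M = mat (dA*dB) (dA*dB) (\<lambda>(r,c). if r mod dB = 0 \<and> c mod dB = 0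
      then partial_trace_B dA dB M $$ (r div dB, c div dB) else 0)"

lemma Brep_carrier[simp]: "Brep dA dB M \<in> carrier_mat (dA*dB) (dA*dB)"
  unfolding Brep_def by simp

lemma Brep_dims[simp]: "dim_row (Brep dA dB M) = dA*dB" "dim_col (Brep dA dB M) = dA*dB"
  unfolding Brep_def by simp_all

lemma Brep_index: "r < dA*dB \<Longrightarrow> c < dA*dB \<Longrightarrow> Brep dA dB M $$ (r,c) =
   (if r mod dB = 0 \<and> c mod dB = 0 then partial_trace_B dA dB M $$ (r div dB, c div dB) else 0)"
  unfolding Brep_def by simp

lemma Brep_linear: "linear_map_on (dA*dB) (Brep dA dB)"
  unfolding linear_map_on_def
  by (auto simp: Brep_index ptr_add ptr_smult idx_div_lt intro!: eq_matI)

lemma Brep_tp: assumes "dB > 0" shows "trace_preserving (dA*dB) (Brep dA dB)"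
  unfolding trace_preserving_def
proof (intro ballI)
  fix M :: "complex mat" assume M: "M \<in> carrier_mat (dA*dB) (dA*dB)"
  have "mtrace (Brep dA dB M) = (\<Sum>a<dA. \<Sum>b<dB. Brep dA dB M $$ (a * dB + b, a * dB + b))"
    by (rule mtrace_prod) simp
  also have "\<dots> = (\<Sum>a<dA. \<Sum>b<dB. if b = 0 then partial_trace_B dA dB M $$ (a, a) else 0)"
    by (intro sum.cong refl) (auto simp: Brep_index idx_lt)
  also have "\<dots> = (\<Sum>a<dA. partial_trace_B dA dB M $$ (a, a))"
    using assms by (simp add: sum.delta)
  also have "\<dots> = mtrace M" using M by (simp add: mtrace_prod ptr_index)
  finally show "mtrace (Brep dA dB M) = mtrace M" .
qed

lemma Brep_cp: assumes "dB > 0" shows "completely_positive (dA*dB) (Brep dA dB)"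
  unfolding completely_positive_def
proof (intro allI impI)
  fix k :: nat and M :: "complex mat"
  assume k: "k > 0" and M: "psd (dA * dB * k) M"
  let ?n = "dA*dB"
  define g where "g m r = ((r div k div dB) * dB + m) * k + r mod k" for m r
  define \<alpha> where "\<alpha> m r = (if (r div k) mod dB = 0 then 1 else (0::complex))" for m r :: nat
  show "psd (?n * k) (tensor_id (Brep dA dB) ?n k M)"
  proof (rule kraus_psd[OF M, where g = g and \<alpha> = \<alpha> and L = dB])
    show "tensor_id (Brep dA dB) ?n k M \<in> carrier_mat (?n * k) (?n * k)"
      unfolding tensor_id_def by simp
  next
    fix m r assume m: "m < dB" and r: "r < ?n * k"
    have "r div k < ?n" using r idx_div_lt by blast
    hence "r div k div dB < dA" using idx_div_lt by blast
    hence "r div k div dB * dB + m < ?n" using m idx_lt by blast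
    thus "g m r < ?n * k" unfolding g_def using idx_lt k by auto
  next
    fix r c assume r: "r < ?n * k" and c: "c < ?n * k"
    have R: "r div k < ?n" using r idx_div_lt by blast
    have C: "c div k < ?n" using c idx_div_lt by blast
    have R2: "r div k div dB < dA" using R idx_div_lt by blast
    have C2: "c div k div dB < dA" using C idx_div_lt by blast
    have rm: "r mod k < k" "c mod k < k" using k by auto
    have bd: "\<And>a m. a < dA \<Longrightarrow> m < dB \<Longrightarrow> a * dB + m < ?n" using idx_lt by blast
    show "tensor_id (Brep dA dB) ?n k M $$ (r, c) =
       (\<Sum>m<dB. \<alpha> m r * M $$ (g m r, g m c) * cnj (\<alpha> m c))"
      using r c R C R2 C2
      by (auto simp: tensor_id_def Brep_index ptr_index block_def \<alpha>_def g_def bd intro!: sum.cong)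
  qed
qed


lemma block_carrier[simp]: "block dA dB M k l \<in> carrier_mat dA dA"
  unfolding block_def by simp

lemma tensor_id_index: "r < dA*dB \<Longrightarrow> c < dA*dB \<Longrightarrow> tensor_id \<Phi> dA dB M $$ (r,c) =
   \<Phi> (block dA dB M (r mod dB) (c mod dB)) $$ (r div dB, c div dB)"
  unfolding tensor_id_def by simp

lemma tensor_id_carrier[simp]: "tensor_id \<Phi> dA dB M \<in> carrier_mat (dA*dB) (dA*dB)"
  unfolding tensor_id_def by simp

lemma ptr_tensor:
  assumes A: "linear_map_on dA \<A>"
  shows "partial_trace_B dA dB (tensor_id \<A> dA dB M) = \<A> (partial_trace_B dA dB M)"
proof -
  define S where "S m = mat dA dA (\<lambda>(i,j). \<Sum>k<m. M $$ (i * dB + k, j * dB + k))" for m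
  have SC: "S m \<in> carrier_mat dA dA" for m unfolding S_def by simp
  have claim: "\<forall>i<dA. \<forall>j<dA. \<A> (S m) $$ (i,j) = (\<Sum>k<m. \<A> (block dA dB M k k) $$ (i,j))" for m
  proof (induction m)
    case 0
    have "S 0 = 0\<^sub>m dA dA" unfolding S_def by (intro eq_matI) auto
    thus ?case using lin_zero[OF A] by simp
  next
    case (Suc m)
    have "S (Suc m) = S m + block dA dB M m m"
      unfolding S_def block_def by (intro eq_matI) auto
    hence "\<A> (S (Suc m)) = \<A> (S m) + \<A> (block dA dB M m m)"
      using lin_add[OF A SC block_carrier] by simp
    moreover have "\<A> (block dA dB M m m) \<in> carrier_mat dA dA" using lin_carrier[OF A] by simp
    ultimately show ?case using Suc by auto
  qed
  have "S dB = partial_trace_B dA dB M" unfolding S_def partial_trace_B_def by simp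
  moreover have "partial_trace_B dA dB (tensor_id \<A> dA dB M) $$ (i,j) = \<A> (S dB) $$ (i,j)"
    if "i < dA" "j < dA" for i j
    using that claim[of dB] by (simp add: ptr_index tensor_id_index idx_lt)
  moreover have "\<A> (S dB) \<in> carrier_mat dA dA" using lin_carrier[OF A SC] .
  ultimately show ?thesis by (intro eq_matI) auto
qed

lemma Brep_block: assumes "k < dB" "l < dB"
  shows "block dA dB (Brep dA dB M) k l = (if k = 0 \<and> l = 0 then partial_trace_B dA dB M else 0\<^sub>m dA dA)"
  using assms by (intro eq_matI) (auto simp: block_def Brep_index idx_lt)

lemma Brep_commute:
  assumes A: "channel dA \<A>" and "dB > 0"
  shows "Brep dA dB (tensor_id \<A> dA dB M) = tensor_id \<A> dA dB (Brep dA dB M)"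
proof -
  have L: "linear_map_on dA \<A>" using A channel_lin by blast
  have z: "\<A> (0\<^sub>m dA dA) = 0\<^sub>m dA dA" using lin_zero[OF L] .
  have PC: "\<A> (partial_trace_B dA dB M) \<in> carrier_mat dA dA" using lin_carrier[OF L] by simp
  show ?thesis
  proof (intro eq_matI)
    fix r c assume "r < dim_row (tensor_id \<A> dA dB (Brep dA dB M))" "c < dim_col (tensor_id \<A> dA dB (Brep dA dB M))"
    hence r: "r < dA*dB" and c: "c < dA*dB" unfolding tensor_id_def by auto
    have "r div dB < dA" "c div dB < dA" using r c idx_div_lt by blast+
    moreover have "r mod dB < dB" "c mod dB < dB" using assms(2) by auto
    ultimately show "Brep dA dB (tensor_id \<A> dA dB M) $$ (r, c) = tensor_id \<A> dA dB (Brep dA dB M) $$ (r, c)"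
      using r c PC by (auto simp: Brep_index tensor_id_index ptr_tensor[OF L] Brep_block z)
  qed (auto simp: tensor_id_def)
qed

lemma Brep_channel: assumes "dB > 0" shows "channel (dA*dB) (Brep dA dB)"
  unfolding channel_def using Brep_linear Brep_tp[OF assms] Brep_cp[OF assms] by auto

lemma Brep_commutant: assumes "dB > 0" shows "Brep dA dB \<in> commutant (dA*dB) (local_actions dA dB)"
  unfolding commutant_def local_actions_def using Brep_channel[OF assms] Brep_commute[OF _ assms] by auto

lemma equiv_if:
  assumes "dB > 0" "density_op (dA * dB) \<rho>" "density_op (dA * dB) \<sigma>"
    and "partial_trace_B dA dB \<rho> = partial_trace_B dA dB \<sigma>"
  shows "agent_equiv (dA * dB) (local_actions dA dB) \<rho> \<sigma>"
proof -
  have "Brep dA dB \<rho> = Brep dA dB \<sigma>" unfolding Brep_def assms(4) by (rule refl)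
  hence "Brep dA dB \<rho> \<in> Deg (dA*dB) (local_actions dA dB) \<rho> \<inter> Deg (dA*dB) (local_actions dA dB) \<sigma>"
    unfolding Deg_def using Brep_commutant[OF assms(1), of dA] by (metis (mono_tags, lifting) IntI mem_Collect_eq)
  hence "overlap_step (dA*dB) (local_actions dA dB) \<rho> \<sigma>"
    unfolding overlap_step_def using assms by auto
  thus ?thesis unfolding agent_equiv_def using assms by auto
qed

subsection \<open>Replacement channels on A\<close>

definition outer :: "nat \<Rightarrow> (nat \<Rightarrow> complex) \<Rightarrow> complex mat" where
  "outer d u = mat d d (\<lambda>(i,j). u i * cnj (u j))"

definition Rrep :: "nat \<Rightarrow> (nat \<Rightarrow> complex) \<Rightarrow> complex mat \<Rightarrow> complex mat" where
  "Rrep d u X = mtrace X \<cdot>\<^sub>m outer d u"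

lemma mtrace_add: "M \<in> carrier_mat n n \<Longrightarrow> N \<in> carrier_mat n n \<Longrightarrow> mtrace (M + N) = mtrace M + mtrace N"
  unfolding mtrace_def by (simp add: sum.distrib)

lemma mtrace_smult: "M \<in> carrier_mat n n \<Longrightarrow> mtrace (c \<cdot>\<^sub>m M) = c * mtrace M"
  unfolding mtrace_def by (simp add: sum_distrib_left)

lemma Rrep_linear: "linear_map_on d (Rrep d u)"
  unfolding linear_map_on_def Rrep_def outer_def
  by (auto simp: mtrace_add mtrace_smult intro!: eq_matI simp: algebra_simps)

lemma Rrep_tp: assumes "(\<Sum>i<d. u i * cnj (u i)) = 1" shows "trace_preserving d (Rrep d u)"
  unfolding trace_preserving_def Rrep_def
proof
  fix M :: "complex mat" assume "M \<in> carrier_mat d d"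
  have "mtrace (mtrace M \<cdot>\<^sub>m outer d u) = mtrace M * mtrace (outer d u)"
    by (rule mtrace_smult[of _ d]) (simp add: outer_def)
  also have "mtrace (outer d u) = 1" using assms by (simp add: outer_def mtrace_def)
  finally show "mtrace (mtrace M \<cdot>\<^sub>m outer d u) = mtrace M" by simp
qed

lemma Rrep_cp: "completely_positive d (Rrep d u)"
  unfolding completely_positive_def
proof (intro allI impI)
  fix k :: nat and M :: "complex mat"
  assume k: "k > 0" and M: "psd (d * k) M"
  define g where "g m r = m * k + r mod k" for m r
  define \<alpha> where "\<alpha> m r = u (r div k)" for m r :: nat
  show "psd (d * k) (tensor_id (Rrep d u) d k M)"
  proof (rule kraus_psd[OF M, where g = g and \<alpha> = \<alpha> and L = d])
    show "tensor_id (Rrep d u) d k M \<in> carrier_mat (d * k) (d * k)"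
      unfolding tensor_id_def by simp
  next
    fix m r assume m: "m < d" and r: "r < d * k"
    thus "g m r < d * k" unfolding g_def using idx_lt k by auto
  next
    fix r c assume r: "r < d * k" and c: "c < d * k"
    have R: "r div k < d" "c div k < d" using r c idx_div_lt by blast+
    show "tensor_id (Rrep d u) d k M $$ (r, c) =
       (\<Sum>m<d. \<alpha> m r * M $$ (g m r, g m c) * cnj (\<alpha> m c))"
      using r c R
      by (auto simp: tensor_id_def Rrep_def outer_def mtrace_def block_def \<alpha>_def g_def
          sum_distrib_left sum_distrib_right intro!: sum.cong)
  qed
qed

lemma Rrep_channel: assumes "(\<Sum>i<d. u i * cnj (u i)) = 1" shows "channel d (Rrep d u)"
  unfolding channel_def using Rrep_linear Rrep_tp[OF assms] Rrep_cp by auto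

subsection \<open>Commutant elements preserve the partial trace\<close>

lemma mtrace_ptr: assumes "X \<in> carrier_mat (dA*dB) (dA*dB)"
  shows "mtrace (partial_trace_B dA dB X) = mtrace X"
proof -
  have "mtrace (partial_trace_B dA dB X) = (\<Sum>a<dA. \<Sum>b<dB. X $$ (a * dB + b, a * dB + b))"
    unfolding mtrace_def by (simp add: ptr_index)
  also have "\<dots> = mtrace X" using mtrace_prod[OF assms] by simp
  finally show ?thesis .
qed

lemma commutant_facts:
  assumes "\<B> \<in> commutant n Act"
  shows "linear_map_on n \<B>" "trace_preserving n \<B>"
    "\<And>C M. C \<in> Act \<Longrightarrow> M \<in> carrier_mat n n \<Longrightarrow> \<B> (C M) = C (\<B> M)"
  using assms unfolding commutant_def channel_def by auto

lemma PG:
  assumes "X \<in> carrier_mat (dA*dB) (dA*dB)"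
  shows "partial_trace_B dA dB (tensor_id (Rrep dA u) dA dB X) = mtrace X \<cdot>\<^sub>m outer dA u"
  using assms by (simp add: ptr_tensor[OF Rrep_linear] Rrep_def mtrace_ptr)

lemma fPG:
  assumes B: "\<B> \<in> commutant (dA*dB) (local_actions dA dB)"
    and u: "(\<Sum>i<dA. u i * cnj (u i)) = 1"
    and X: "X \<in> carrier_mat (dA*dB) (dA*dB)"
  shows "partial_trace_B dA dB (\<B> (tensor_id (Rrep dA u) dA dB X)) = partial_trace_B dA dB (tensor_id (Rrep dA u) dA dB X)"
proof -
  have G: "tensor_id (Rrep dA u) dA dB \<in> local_actions dA dB"
    unfolding local_actions_def using Rrep_channel[OF u] by auto
  have BX: "\<B> X \<in> carrier_mat (dA*dB) (dA*dB)" using lin_carrier[OF commutant_facts(1)[OF B] X] .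
  have "\<B> (tensor_id (Rrep dA u) dA dB X) = tensor_id (Rrep dA u) dA dB (\<B> X)"
    using commutant_facts(3)[OF B G X] .
  hence "partial_trace_B dA dB (\<B> (tensor_id (Rrep dA u) dA dB X)) = mtrace (\<B> X) \<cdot>\<^sub>m outer dA u"
    using PG[OF BX] by simp
  also have "mtrace (\<B> X) = mtrace X" using commutant_facts(2)[OF B] X unfolding trace_preserving_def by auto
  finally show ?thesis using PG[OF X] by simp
qed

definition pm :: "nat \<Rightarrow> nat \<Rightarrow> (nat \<Rightarrow> nat \<Rightarrow> complex) \<Rightarrow> complex mat \<Rightarrow> complex mat" where
  "pm dA dB w Y = mat (dA*dB) (dA*dB) (\<lambda>(r,c). w (r div dB) (c div dB) * Y $$ (r mod dB, c mod dB))"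

definition lift :: "nat \<Rightarrow> nat \<Rightarrow> complex mat \<Rightarrow> complex mat" where
  "lift dA dB Y = mat (dA*dB) (dA*dB) (\<lambda>(r,c). if r div dB = 0 \<and> c div dB = 0 then Y $$ (r mod dB, c mod dB) else 0)"

lemma G_lift: assumes "dA > 0" "dB > 0"
  shows "tensor_id (Rrep dA u) dA dB (lift dA dB Y) = pm dA dB (\<lambda>i j. u i * cnj (u j)) Y"
proof (intro eq_matI)
  fix r c assume "r < dim_row (pm dA dB (\<lambda>i j. u i * cnj (u j)) Y)" "c < dim_col (pm dA dB (\<lambda>i j. u i * cnj (u j)) Y)"
  hence r: "r < dA*dB" and c: "c < dA*dB" unfolding pm_def by auto
  have d: "r div dB < dA" "c div dB < dA" using r c idx_div_lt by blast+
  have m: "r mod dB < dB" "c mod dB < dB" using assms by auto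
  have tr: "mtrace (block dA dB (lift dA dB Y) k l) = Y $$ (k,l)" if "k < dB" "l < dB" for k l
  proof -
    have "mtrace (block dA dB (lift dA dB Y) k l) = (\<Sum>a<dA. if a = 0 then Y $$ (k,l) else 0)"
      unfolding mtrace_def block_def lift_def using that by (auto simp: idx_lt intro!: sum.cong)
    also have "\<dots> = Y $$ (k,l)" using assms by simp
    finally show ?thesis .
  qed
  show "tensor_id (Rrep dA u) dA dB (lift dA dB Y) $$ (r, c) = pm dA dB (\<lambda>i j. u i * cnj (u j)) Y $$ (r, c)"
    using r c d m by (simp add: tensor_id_index Rrep_def outer_def tr pm_def)
qed (auto simp: pm_def tensor_id_def)

lemma lift_carrier[simp]: "lift dA dB Y \<in> carrier_mat (dA*dB) (dA*dB)" unfolding lift_def by simp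
lemma pm_carrier[simp]: "pm dA dB w Y \<in> carrier_mat (dA*dB) (dA*dB)" unfolding pm_def by simp

lemma good_outer:
  assumes "dA > 0" "dB > 0" and B: "\<B> \<in> commutant (dA*dB) (local_actions dA dB)"
    and u: "(\<Sum>i<dA. u i * cnj (u i)) = 1"
  shows "partial_trace_B dA dB (\<B> (pm dA dB (\<lambda>i j. u i * cnj (u j)) Y)) = partial_trace_B dA dB (pm dA dB (\<lambda>i j. u i * cnj (u j)) Y)"
  using fPG[OF B u lift_carrier, of Y] G_lift[OF assms(1,2)] by simp

lemma good_comb:
  assumes B: "\<B> \<in> commutant (dA*dB) (local_actions dA dB)"
    and 1: "partial_trace_B dA dB (\<B> (pm dA dB w1 Y)) = partial_trace_B dA dB (pm dA dB w1 Y)"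
    and 2: "partial_trace_B dA dB (\<B> (pm dA dB w2 Y)) = partial_trace_B dA dB (pm dA dB w2 Y)"
  shows "partial_trace_B dA dB (\<B> (pm dA dB (\<lambda>i j. w1 i j + c * w2 i j) Y)) = partial_trace_B dA dB (pm dA dB (\<lambda>i j. w1 i j + c * w2 i j) Y)"
proof -
  have L: "linear_map_on (dA*dB) \<B>" using commutant_facts(1)[OF B] .
  have e: "pm dA dB (\<lambda>i j. w1 i j + c * w2 i j) Y = pm dA dB w1 Y + c \<cdot>\<^sub>m pm dA dB w2 Y"
    by (intro eq_matI) (auto simp: pm_def algebra_simps)
  have c1: "\<B> (pm dA dB w1 Y) \<in> carrier_mat (dA*dB) (dA*dB)" "\<B> (pm dA dB w2 Y) \<in> carrier_mat (dA*dB) (dA*dB)"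
    using lin_carrier[OF L] by auto
  show ?thesis unfolding e
    using 1 2 c1 by (simp add: lin_add[OF L] lin_smult[OF L] ptr_add ptr_smult)
qed

lemma sum_two: assumes "a \<noteq> b" "a < (d::nat)" "b < d"
  shows "(\<Sum>i<d. if i = a then x else if i = b then y else (0::complex)) = x + y"
proof -
  have "(\<Sum>i<d. if i = a then x else if i = b then y else (0::complex)) = (\<Sum>i<d. (if i = a then x else 0) + (if i = b then y else 0))"
    using assms(1) by (intro sum.cong) auto
  also have "\<dots> = (\<Sum>i<d. (if i = a then x else 0)) + (\<Sum>i<d. (if i = b then y else 0))"
    by (simp add: sum.distrib)
  also have "\<dots> = x + y" using assms by (subst sum.delta, simp, subst sum.delta, auto)
  finally show ?thesis .
qed

lemma good_E:
  assumes "dA > 0" "dB > 0" and B: "\<B> \<in> commutant (dA*dB) (local_actions dA dB)"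
    and ab: "a < dA" "b < dA"
  shows "partial_trace_B dA dB (\<B> (pm dA dB (\<lambda>i j. if i = a \<and> j = b then 1 else 0) Y)) =
         partial_trace_B dA dB (pm dA dB (\<lambda>i j. if i = a \<and> j = b then 1 else 0) Y)"
proof -
  have diag: "partial_trace_B dA dB (\<B> (pm dA dB (\<lambda>i j. if i = a' \<and> j = a' then 1 else 0) Y)) =
         partial_trace_B dA dB (pm dA dB (\<lambda>i j. if i = a' \<and> j = a' then 1 else 0) Y)" if a': "a' < dA" for a'
  proof -
    define u where "u i = (if i = a' then 1 else (0::complex))" for i
    have "(\<lambda>i j. u i * cnj (u j)) = (\<lambda>i j. if i = a' \<and> j = a' then 1 else 0)"
      unfolding u_def by (intro ext) auto
    moreover have "(\<Sum>i<dA. u i * cnj (u i)) = 1" unfolding u_def using a' by (simp add: if_distrib cong: if_cong)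
    ultimately show ?thesis using good_outer[OF assms(1,2) B, of u Y] by simp
  qed
  show ?thesis
  proof (cases "a = b")
    case True thus ?thesis using diag[OF ab(1)] by simp
  next
    case False
    define s where "s = complex_of_real (sqrt (1/2))"
    have ss: "s * s = 1/2" unfolding s_def by (simp flip: of_real_mult)
    have cs: "cnj s = s" unfolding s_def by simp
    have ims: "Im s = 0" unfolding s_def by simp
    have res: "Re s * Re s = 1/2" unfolding s_def by simp
    have iis: "\<i> * s * (\<i> * s) = - (s * s)" by (metis complex_i_mult_minus mult.assoc mult.left_commute)
    define u1 where "u1 i = (if i = a then s else if i = b then s else 0)" for i
    define u2 where "u2 i = (if i = a then s else if i = b then \<i> * s else 0)" for i
    have n1: "(\<Sum>i<dA. u1 i * cnj (u1 i)) = 1"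
    proof -
      have "(\<Sum>i<dA. u1 i * cnj (u1 i)) = (\<Sum>i<dA. if i = a then s * s else if i = b then s * s else 0)"
        unfolding u1_def by (intro sum.cong) (auto simp: cs)
      also have "\<dots> = 1" using sum_two[OF False ab] ss by (simp add: mult.commute)
      finally show ?thesis .
    qed
    have n2: "(\<Sum>i<dA. u2 i * cnj (u2 i)) = 1"
    proof -
      have "(\<Sum>i<dA. u2 i * cnj (u2 i)) = (\<Sum>i<dA. if i = a then s * s else if i = b then s * s else 0)"
        unfolding u2_def by (intro sum.cong) (auto simp: cs iis)
      also have "\<dots> = 1" using sum_two[OF False ab] ss by (simp add: mult.commute)
      finally show ?thesis .
    qed
    define c where "c = - (1 + \<i>) / (2::complex)"
    define w1 where "w1 = (\<lambda>i j. u1 i * cnj (u1 j))"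
    define w2 where "w2 = (\<lambda>i j. u2 i * cnj (u2 j))"
    define ea where "ea = (\<lambda>i j. if i = a \<and> j = a then 1 else (0::complex))"
    define eb where "eb = (\<lambda>i j. if i = b \<and> j = b then 1 else (0::complex))"
    have g1: "partial_trace_B dA dB (\<B> (pm dA dB w1 Y)) = partial_trace_B dA dB (pm dA dB w1 Y)"
      unfolding w1_def by (rule good_outer[OF assms(1,2) B n1])
    have g2: "partial_trace_B dA dB (\<B> (pm dA dB w2 Y)) = partial_trace_B dA dB (pm dA dB w2 Y)"
      unfolding w2_def by (rule good_outer[OF assms(1,2) B n2])
    have ga: "partial_trace_B dA dB (\<B> (pm dA dB ea Y)) = partial_trace_B dA dB (pm dA dB ea Y)"
      unfolding ea_def by (rule diag[OF ab(1)])
    have gb: "partial_trace_B dA dB (\<B> (pm dA dB eb Y)) = partial_trace_B dA dB (pm dA dB eb Y)"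
      unfolding eb_def by (rule diag[OF ab(2)])
    note g12 = good_comb[OF B g1 g2, of "\<i>"]
    note g12a = good_comb[OF B g12 ga, of c]
    note g12ab = good_comb[OF B g12a gb, of c]
    have eq: "(\<lambda>i j. if i = a \<and> j = b then 1 else 0) =
      (\<lambda>i j. (w1 i j + \<i> * w2 i j) + c * ea i j + c * eb i j)"
    proof (intro ext)
      fix i j
      show "(if i = a \<and> j = b then 1 else 0) = (w1 i j + \<i> * w2 i j) + c * ea i j + c * eb i j"
        using False unfolding w1_def w2_def ea_def eb_def u1_def u2_def c_def
        by (auto simp: cs iis ss algebra_simps complex_eq_iff ims res)
    qed
    show ?thesis unfolding eq using g12ab by simp
  qed
qed

lemma preserve_ptr:
  assumes dA: "dA > 0" and dB: "dB > 0" and B: "\<B> \<in> commutant (dA*dB) (local_actions dA dB)"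
    and M: "M \<in> carrier_mat (dA*dB) (dA*dB)"
  shows "partial_trace_B dA dB (\<B> M) = partial_trace_B dA dB M"
proof -
  let ?n = "dA*dB"
  have L: "linear_map_on ?n \<B>" using commutant_facts(1)[OF B] .
  define Mt where "Mt t = mat ?n ?n (\<lambda>(r,c). if r * ?n + c < t then M $$ (r,c) else 0)" for t
  have MtC: "Mt t \<in> carrier_mat ?n ?n" for t unfolding Mt_def by simp
  have claim: "t \<le> ?n * ?n \<Longrightarrow> partial_trace_B dA dB (\<B> (Mt t)) = partial_trace_B dA dB (Mt t)" for t
  proof (induction t)
    case 0
    have "Mt 0 = 0\<^sub>m ?n ?n" unfolding Mt_def by (intro eq_matI) auto
    thus ?case using lin_zero[OF L] by simp
  next
    case (Suc t)
    hence t: "t < ?n * ?n" by simp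
    have npos: "?n > 0" using dA dB by simp
    define r0 where "r0 = t div ?n"
    define c0 where "c0 = t mod ?n"
    have r0: "r0 < ?n" unfolding r0_def using t idx_div_lt by blast
    have c0: "c0 < ?n" unfolding c0_def using npos by simp
    have tdef: "t = r0 * ?n + c0" unfolding r0_def c0_def by (metis div_mult_mod_eq)
    define Y where "Y = mat dB dB (\<lambda>(k,l). if k = r0 mod dB \<and> l = c0 mod dB then 1 else (0::complex))"
    define w where "w = (\<lambda>i j. if i = r0 div dB \<and> j = c0 div dB then 1 else (0::complex))"
    have gw: "partial_trace_B dA dB (\<B> (pm dA dB w Y)) = partial_trace_B dA dB (pm dA dB w Y)"
      unfolding w_def by (rule good_E[OF dA dB B idx_div_lt[OF r0] idx_div_lt[OF c0]])
    have eqr: "(r div dB = x div dB \<and> r mod dB = x mod dB) = (r = x)" for r x :: nat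
      by (metis div_mult_mod_eq)
    have eqt: "(r * ?n + c = t) = (r = r0 \<and> c = c0)" if "c < ?n" for r c
      using that c0 tdef by (metis idx_div idx_mod)
    have split: "Mt (Suc t) = Mt t + M $$ (r0, c0) \<cdot>\<^sub>m pm dA dB w Y"
    proof (intro eq_matI)
      fix r c assume "r < dim_row (Mt t + M $$ (r0, c0) \<cdot>\<^sub>m pm dA dB w Y)" "c < dim_col (Mt t + M $$ (r0, c0) \<cdot>\<^sub>m pm dA dB w Y)"
      hence r: "r < ?n" and c: "c < ?n" unfolding pm_def by auto
      have rm: "r mod dB < dB" "c mod dB < dB" using dB by auto
      have "pm dA dB w Y $$ (r,c) = (if r = r0 \<and> c = c0 then 1 else 0)"
        using r c rm unfolding pm_def w_def Y_def using eqr[of r r0] eqr[of c c0] by auto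
      moreover have "(r * ?n + c < Suc t) = (r * ?n + c < t \<or> (r = r0 \<and> c = c0))"
        by (simp only: less_Suc_eq eqt[OF c])
      ultimately show "Mt (Suc t) $$ (r, c) = (Mt t + M $$ (r0, c0) \<cdot>\<^sub>m pm dA dB w Y) $$ (r, c)"
        using r c tdef unfolding Mt_def pm_def by (auto simp: idx_lt)
    qed (auto simp: Mt_def pm_def)
    have c1: "\<B> (Mt t) \<in> carrier_mat ?n ?n" "\<B> (pm dA dB w Y) \<in> carrier_mat ?n ?n"
      using lin_carrier[OF L MtC] lin_carrier[OF L pm_carrier] by auto
    have "partial_trace_B dA dB (\<B> (Mt (Suc t))) =
       partial_trace_B dA dB (\<B> (Mt t)) + M $$ (r0, c0) \<cdot>\<^sub>m partial_trace_B dA dB (\<B> (pm dA dB w Y))"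
      unfolding split using c1 MtC by (simp add: lin_add[OF L] lin_smult[OF L] ptr_add ptr_smult)
    also have "\<dots> = partial_trace_B dA dB (Mt t) + M $$ (r0, c0) \<cdot>\<^sub>m partial_trace_B dA dB (pm dA dB w Y)"
      using Suc.IH t gw by simp
    also have "\<dots> = partial_trace_B dA dB (Mt (Suc t))"
      unfolding split using MtC by (simp add: ptr_add ptr_smult)
    finally show ?case .
  qed
  have "Mt (?n * ?n) = M"
    unfolding Mt_def using M by (intro eq_matI) (auto simp: idx_lt)
  thus ?thesis using claim[of "?n * ?n"] by simp
qed

lemma equiv_only_if:
  assumes "dA > 0" "dB > 0" "agent_equiv (dA * dB) (local_actions dA dB) \<rho> \<sigma>"
  shows "partial_trace_B dA dB \<rho> = partial_trace_B dA dB \<sigma>"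
proof -
  have "(overlap_step (dA*dB) (local_actions dA dB))\<^sup>*\<^sup>* \<rho> \<sigma>" using assms(3) unfolding agent_equiv_def by auto
  thus ?thesis
  proof (induction rule: rtranclp_induct)
    case base thus ?case by simp
  next
    case (step y z)
    from step.hyps(2) have dy: "density_op (dA*dB) y" and dz: "density_op (dA*dB) z"
      and ne: "Deg (dA*dB) (local_actions dA dB) y \<inter> Deg (dA*dB) (local_actions dA dB) z \<noteq> {}"
      unfolding overlap_step_def by auto
    then obtain B1 B2 where B1: "B1 \<in> commutant (dA*dB) (local_actions dA dB)"
      and B2: "B2 \<in> commutant (dA*dB) (local_actions dA dB)" and e: "B1 y = B2 z"
      unfolding Deg_def by blast
    have "partial_trace_B dA dB y = partial_trace_B dA dB (B1 y)"
      using preserve_ptr[OF assms(1,2) B1 density_carrier[OF dy]] by simp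
    also have "\<dots> = partial_trace_B dA dB z"
      using e preserve_ptr[OF assms(1,2) B2 density_carrier[OF dz]] by simp
    finally show ?case using step.IH by simp
  qed
qed

theorem mainTheorem3:
  fixes dA dB :: nat and \<rho> \<sigma> :: "complex mat"
  assumes "dA > 0" and "dB > 0"
    and "density_op (dA * dB) \<rho>" and "density_op (dA * dB) \<sigma>"
  shows "agent_equiv (dA * dB) (local_actions dA dB) \<rho> \<sigma> \<longleftrightarrow>
         partial_trace_B dA dB \<rho> = partial_trace_B dA dB \<sigma>"
  using equiv_only_if[OF assms(1,2)] equiv_if[OF assms(2,3,4)] by blast

end
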